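(* There exists $K_0<\infty$ such that for every $K\in[K_0,\infty)$, every minimizer of $\mathcal{L}_K$ on $M_K$ is a non-constant function.
   Context: Fix $p>2$, $1<q<p$, $\sigma^2>0$. For $K\in(0,\infty)$, $I_K=(-K,K]$ and functions on $I_K$ are identified with $2K$-periodic functions on $\mathbb{R}$; $\|\cdot\|_{r,I_K}$ is the $L^r$ norm over $I_K$. $(\mathcal{A}W)(\varphi)=\int_{\varphi-1/2}^{\varphi+1/2}W(s)\,ds$. $X_K=\{W\in L^2(I_K):\mathcal{A}W\in L^q(I_K)\cap L^p(I_K)\}$, $\mathcal{Q}_K(W)=\int_{I_K}|\mathcal{A}W|^q$, $\mathcal{P}_K(W)=\int_{I_K}|\mathcal{A}W|^p$, $\mathcal{L}_K(W)=\tfrac12\sigma^2\|W\|_{2,I_K}^2+\mathcal{Q}_K(W)-\mathcal{P}_K(W)$, $\mathcal{F}_K(W)=\sigma^2\|W\|_{2,I_K}^2+q\mathcal{Q}_K(W)-p\mathcal{P}_K(W)$, $M_K=\{W\in X_K:W\ne0,\ \mathcal{F}_K(W)=0\}$. *)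

theory Defs
  imports "HOL-Analysis.Analysis"
begin

text \<open>Functions on I_K = (-K,K] are represented as 2K-periodic real functions on the real line.\<close>

definition IK :: "real \<Rightarrow> real set" where
  "IK K = {-K<..K}"

definition avgop :: "(real \<Rightarrow> real) \<Rightarrow> real \<Rightarrow> real" where
  "avgop W \<phi> = (LBINT s:{\<phi> - 1/2 .. \<phi> + 1/2}. W s)"

definition L2sq :: "real \<Rightarrow> (real \<Rightarrow> real) \<Rightarrow> real" where
  "L2sq K W = (LBINT x:IK K. (W x)\<^sup>2)"

definition XK :: "real \<Rightarrow> real \<Rightarrow> real \<Rightarrow> (real \<Rightarrow> real) set" where
  "XK p q K = {W. (\<forall>x. W (x + 2 * K) = W x) \<and> W \<in> borel_measurable lborel
      \<and> set_integrable lborel (IK K) (\<lambda>x. (W x)\<^sup>2)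
      \<and> set_integrable lborel (IK K) (\<lambda>x. \<bar>avgop W x\<bar> powr q)
      \<and> set_integrable lborel (IK K) (\<lambda>x. \<bar>avgop W x\<bar> powr p)}"

definition QK :: "real \<Rightarrow> real \<Rightarrow> (real \<Rightarrow> real) \<Rightarrow> real" where
  "QK q K W = (LBINT x:IK K. \<bar>avgop W x\<bar> powr q)"

definition PK :: "real \<Rightarrow> real \<Rightarrow> (real \<Rightarrow> real) \<Rightarrow> real" where
  "PK p K W = (LBINT x:IK K. \<bar>avgop W x\<bar> powr p)"

definition LK :: "real \<Rightarrow> real \<Rightarrow> real \<Rightarrow> real \<Rightarrow> (real \<Rightarrow> real) \<Rightarrow> real" where
  "LK \<sigma>2 p q K W = 1/2 * \<sigma>2 * L2sq K W + QK q K W - PK p K W"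

definition FK :: "real \<Rightarrow> real \<Rightarrow> real \<Rightarrow> real \<Rightarrow> (real \<Rightarrow> real) \<Rightarrow> real" where
  "FK \<sigma>2 p q K W = \<sigma>2 * L2sq K W + q * QK q K W - p * PK p K W"

text \<open>W \<noteq> 0 as an element of L^2(I_K): not almost everywhere zero on I_K.\<close>
definition MK :: "real \<Rightarrow> real \<Rightarrow> real \<Rightarrow> real \<Rightarrow> (real \<Rightarrow> real) set" where
  "MK \<sigma>2 p q K = {W \<in> XK p q K. \<not> (AE x in lborel. x \<in> IK K \<longrightarrow> W x = 0)
                                  \<and> FK \<sigma>2 p q K W = 0}"

definition is_minimizer_on_MK :: "real \<Rightarrow> real \<Rightarrow> real \<Rightarrow> real \<Rightarrow> (real \<Rightarrow> real) \<Rightarrow> bool" where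
  "is_minimizer_on_MK \<sigma>2 p q K W \<longleftrightarrow>
     W \<in> MK \<sigma>2 p q K \<and> (\<forall>V \<in> MK \<sigma>2 p q K. LK \<sigma>2 p q K W \<le> LK \<sigma>2 p q K V)"

text \<open>Constant as an element of L^2(I_K): almost everywhere equal to a constant on I_K.\<close>
definition ae_constant_on_IK :: "real \<Rightarrow> (real \<Rightarrow> real) \<Rightarrow> bool" where
  "ae_constant_on_IK K W \<longleftrightarrow> (\<exists>c. AE x in lborel. x \<in> IK K \<longrightarrow> W x = c)"

end

theory Submission imports Defs begin


lemma AE_lborel_shift:
  fixes P :: "real \<Rightarrow> bool"
  assumes "AE x in lborel. P x" "{x. P x} \<in> sets borel"
  shows "AE x in lborel. P (a + x)"
proof -
  have "AE x in distr lborel borel ((+) a). P x" using assms(1) unfolding lborel_distr_plus .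
  then show ?thesis using assms(2) by (subst (asm) AE_distr_iff) auto
qed

lemma avgop_const:
  assumes W: "W \<in> XK p q K" and K: "K \<ge> 2"
    and ae: "AE x in lborel. x \<in> IK K \<longrightarrow> W x = c" and x: "x \<in> IK K"
  shows "avgop W x = c"
proof -
  have per: "\<And>y. W (y + 2 * K) = W y" and [measurable]: "W \<in> borel_measurable borel"
    using W unfolding XK_def by auto
  have ms: "{y. y \<in> IK K \<longrightarrow> W y = c} \<in> sets borel" unfolding IK_def by measurable
  have h1: "AE y in lborel. 2*K + y \<in> IK K \<longrightarrow> W (2*K + y) = c"
    by (rule AE_lborel_shift[OF ae ms])
  have h2: "AE y in lborel. -2*K + y \<in> IK K \<longrightarrow> W (-2*K + y) = c"
    by (rule AE_lborel_shift[OF ae ms])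
  have "AE y in lborel. y \<in> {x-1/2..x+1/2} \<longrightarrow> W y = c"
    using h1 h2 ae
  proof eventually_elim
    case (elim y)
    show ?case
    proof
    assume y: "y \<in> {x-1/2..x+1/2}"
    have e1: "W (2*K + y) = W y" using per[of y] by (simp add: add.commute)
    have e2: "W (-2*K + y) = W y" using per[of "-2*K + y"] by simp
    show "W y = c"
    proof (cases "y \<le> - K")
      case True
      then have "2*K + y \<in> IK K" using y x K by (auto simp: IK_def)
      then show ?thesis using elim e1 by auto
    next
      case False
      show ?thesis
      proof (cases "y \<le> K")
        case True
        then have "y \<in> IK K" using False by (auto simp: IK_def)
        then show ?thesis using elim by auto
      next
        case False
        then have "-2*K + y \<in> IK K" using y x K by (auto simp: IK_def)
        then show ?thesis using elim e2 by auto
      qed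
    qed
    qed
  qed
  then have "avgop W x = (LBINT y:{x-1/2..x+1/2}. c)"
    unfolding avgop_def by (intro set_lebesgue_integral_cong_AE) auto
  also have "\<dots> = c" by (simp add: set_integral_const)
  finally show ?thesis .
qed


lemma const_lower:
  fixes p q \<sigma>2 K :: real
  assumes p: "p > 2" and q: "1 < q" "q < p" and s: "\<sigma>2 > 0" and K: "K \<ge> 2"
    and W: "W \<in> MK \<sigma>2 p q K" and cst: "ae_constant_on_IK K W"
  shows "p * LK \<sigma>2 p q K W \<ge> (p/2 - 1) * \<sigma>2 * (2*K) * ((\<sigma>2/p) powr (2/(p-2)))"
proof -
  obtain c where ae: "AE x in lborel. x \<in> IK K \<longrightarrow> W x = c"
    using cst unfolding ae_constant_on_IK_def by auto
  have WX: "W \<in> XK p q K" and nz: "\<not> (AE x in lborel. x \<in> IK K \<longrightarrow> W x = 0)"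
    and F: "FK \<sigma>2 p q K W = 0" using W unfolding MK_def by auto
  have [measurable]: "W \<in> borel_measurable borel" using WX unfolding XK_def by auto
  have c0: "c \<noteq> 0" using nz ae by auto
  have A: "\<And>x. x \<in> IK K \<Longrightarrow> avgop W x = c" using avgop_const[OF WX K ae] by blast
  have mIK: "measure lborel (IK K) = 2*K" using K unfolding IK_def by simp
  have sIK: "IK K \<in> sets lborel" unfolding IK_def by simp
  have eIK: "emeasure lborel (IK K) \<noteq> \<infinity>" unfolding IK_def using K by simp
  have L2: "L2sq K W = 2*K*c\<^sup>2"
  proof -
    have "L2sq K W = (LBINT x:IK K. c\<^sup>2)"
      unfolding L2sq_def using ae
      by (intro set_lebesgue_integral_cong_AE) (auto simp: IK_def elim: AE_mp)
    also have "\<dots> = 2*K*c\<^sup>2" using sIK eIK mIK by (simp add: set_integral_const)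
    finally show ?thesis .
  qed
  define a where "a = \<bar>c\<bar>"
  have a0: "a > 0" using c0 a_def by auto
  have Q: "QK q K W = 2*K*(a powr q)"
  proof -
    have "QK q K W = (LBINT x:IK K. a powr q)"
      unfolding QK_def a_def using A sIK by (intro set_lebesgue_integral_cong) auto
    also have "\<dots> = 2*K*(a powr q)" using sIK eIK mIK by (simp add: set_integral_const)
    finally show ?thesis .
  qed
  have P: "PK p K W = 2*K*(a powr p)"
  proof -
    have "PK p K W = (LBINT x:IK K. a powr p)"
      unfolding PK_def a_def using A sIK by (intro set_lebesgue_integral_cong) auto
    also have "\<dots> = 2*K*(a powr p)" using sIK eIK mIK by (simp add: set_integral_const)
    finally show ?thesis .
  qed
  have c2: "c\<^sup>2 = a powr 2" using a0 unfolding a_def by (simp add: powr_numeral)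
  have Fe: "\<sigma>2 * (2*K*c\<^sup>2) + q * (2*K*(a powr q)) - p * (2*K*(a powr p)) = 0"
    using F L2 Q P unfolding FK_def by simp
  have Fe2: "\<sigma>2 * c\<^sup>2 + q * (a powr q) = p * (a powr p)"
  proof -
    have "2*K*(\<sigma>2 * c\<^sup>2 + q * (a powr q) - p * (a powr p)) = 0"
      using Fe by (simp add: algebra_simps)
    then show ?thesis using K by simp
  qed
  have "a powr p = a powr (2 + (p-2))" by simp
  also have "\<dots> = a powr 2 * a powr (p-2)" by (rule powr_add)
  finally have "a powr p = a powr 2 * a powr (p-2)" .
  then have "\<sigma>2 * a powr 2 \<le> p * (a powr 2 * a powr (p-2))"
    using Fe2 c2 q a0 by (smt (verit) mult_nonneg_nonneg powr_ge_zero)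
  then have "\<sigma>2 \<le> p * a powr (p-2)" using a0 by (simp add: algebra_simps)
  then have "\<sigma>2/p \<le> a powr (p-2)" using p by (simp add: field_simps)
  then have "(\<sigma>2/p) powr (2/(p-2)) \<le> (a powr (p-2)) powr (2/(p-2))"
    using p s by (intro powr_mono2) auto
  also have "\<dots> = a powr ((p-2) * (2/(p-2)))" by (simp only: powr_powr)
  also have "(p-2) * (2/(p-2)) = 2" using p by (simp add: field_simps)
  
  finally have cd: "(\<sigma>2/p) powr (2/(p-2)) \<le> c\<^sup>2" using c2 by simp
  have "p * LK \<sigma>2 p q K W = (p/2 - 1) * \<sigma>2 * (2*K*c\<^sup>2) + (p - q) * (2*K*(a powr q))"
    unfolding LK_def L2 Q P using Fe by (simp add: algebra_simps)
  also have "\<dots> \<ge> (p/2 - 1) * \<sigma>2 * (2*K*c\<^sup>2)"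
    using q K by (simp add: mult_nonneg_nonneg)
  finally have "p * LK \<sigma>2 p q K W \<ge> (p/2 - 1) * \<sigma>2 * (2*K*c\<^sup>2)" .
  moreover have "(p/2 - 1) * \<sigma>2 * (2*K) * ((\<sigma>2/p) powr (2/(p-2))) \<le> (p/2 - 1) * \<sigma>2 * (2*K) * c\<^sup>2"
    by (rule mult_left_mono[OF cd]) (use p s K in simp)
  moreover have "(p/2 - 1) * \<sigma>2 * (2*K*c\<^sup>2) = (p/2 - 1) * \<sigma>2 * (2*K) * c\<^sup>2" by simp
  ultimately show ?thesis by linarith
qed



definition Pset :: "real \<Rightarrow> real set" where
  "Pset K = (\<Union>n::int. {2*K*n - 1/2 .. 2*K*n + 1/2})"

definition Vf :: "real \<Rightarrow> real \<Rightarrow> real \<Rightarrow> real" where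
  "Vf s K x = s * indicator (Pset K) x"

definition tent :: "real \<Rightarrow> real" where
  "tent x = max 0 (1 - \<bar>x\<bar>)"

lemma Pset_local:
  assumes K: "K \<ge> 2" and x: "\<bar>x\<bar> \<le> K + 1/2"
  shows "x \<in> Pset K \<longleftrightarrow> \<bar>x\<bar> \<le> 1/2"
proof
  assume "\<bar>x\<bar> \<le> 1/2"
  then have "x \<in> {2*K*real_of_int 0 - 1/2 .. 2*K*real_of_int 0 + 1/2}" by auto
  then show "x \<in> Pset K" unfolding Pset_def by blast
next
  assume "x \<in> Pset K"
  then obtain n :: int where n: "x \<in> {2*K*n - 1/2 .. 2*K*n + 1/2}" unfolding Pset_def by blast
  show "\<bar>x\<bar> \<le> 1/2"
  proof (cases "n = 0")
    case True then show ?thesis using n by auto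
  next
    case False
    then have "\<bar>real_of_int n\<bar> \<ge> 1" by linarith
    then have "2*K*1 \<le> 2*K*\<bar>real_of_int n\<bar>" using K by (intro mult_left_mono) auto
    also have "\<dots> = \<bar>2*K*real_of_int n\<bar>" using K by (simp add: abs_mult)
    finally have "2*K \<le> \<bar>2*K*real_of_int n\<bar>" by simp
    then show ?thesis using n x K by auto
  qed
qed

lemma Pset_per: "x + 2*K \<in> Pset K \<longleftrightarrow> x \<in> Pset K"
proof
  assume "x + 2*K \<in> Pset K"
  then obtain n :: int where n: "x + 2*K \<in> {2*K*n - 1/2 .. 2*K*n + 1/2}" unfolding Pset_def by blast
  then have "x \<in> {2*K*real_of_int (n-1) - 1/2 .. 2*K*real_of_int (n-1) + 1/2}"
    by (auto simp: algebra_simps)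
  then show "x \<in> Pset K" unfolding Pset_def by blast
next
  assume "x \<in> Pset K"
  then obtain n :: int where n: "x \<in> {2*K*n - 1/2 .. 2*K*n + 1/2}" unfolding Pset_def by blast
  then have "x + 2*K \<in> {2*K*real_of_int (n+1) - 1/2 .. 2*K*real_of_int (n+1) + 1/2}"
    by (auto simp: algebra_simps)
  then show "x + 2*K \<in> Pset K" unfolding Pset_def by blast
qed

lemma Pset_sets: "Pset K \<in> sets borel"
  unfolding Pset_def by (intro sets.countable_UN') auto

lemma Vf_meas[measurable]: "Vf s K \<in> borel_measurable borel"
  unfolding Vf_def using Pset_sets by measurable

lemma Vf_per: "Vf s K (x + 2*K) = Vf s K x"
  unfolding Vf_def using Pset_per by (simp add: indicator_def)

lemma Vf_local:
  assumes "K \<ge> 2" "\<bar>x\<bar> \<le> K + 1/2"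
  shows "Vf s K x = s * indicator {-1/2..1/2} x"
  unfolding Vf_def using Pset_local[OF assms] by (auto simp: indicator_def abs_le_iff)

lemma meas_Icc_Int:
  "measure lborel ({x-1/2..x+1/2} \<inter> {-1/2..1/2::real}) = tent x"
proof -
  have e: "{x-1/2..x+1/2} \<inter> {-1/2..1/2::real} = {max (x-1/2) (-1/2) .. min (x+1/2) (1/2)}"
    by auto
  show ?thesis
  proof (cases "max (x-1/2) (-1/2) \<le> min (x+1/2) (1/2)")
    case True
    then show ?thesis unfolding e tent_def by (auto simp: max_def min_def abs_if)
  next
    case False
    then have "\<bar>x\<bar> \<ge> 1" unfolding max_def min_def by (auto split: if_splits)
    moreover have "{max (x-1/2) (-1/2) .. min (x+1/2) (1/2)} = {}" using False by auto
    ultimately show ?thesis unfolding e tent_def by auto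
  qed
qed

lemma avgop_Vf:
  assumes K: "K \<ge> 2" and x: "x \<in> IK K"
  shows "avgop (Vf s K) x = s * tent x"
proof -
  have "avgop (Vf s K) x = (LBINT y:{x-1/2..x+1/2}. s * indicator {-1/2..1/2} y)"
    unfolding avgop_def
  proof (intro set_lebesgue_integral_cong allI impI)
    fix y assume "y \<in> {x-1/2..x+1/2}"
    then have "\<bar>y\<bar> \<le> K + 1/2" using x unfolding IK_def by auto
    then show "Vf s K y = s * indicator {-1/2..1/2} y" by (rule Vf_local[OF K])
  qed simp
  also have "\<dots> = s * (LINT y|lborel. indicator ({x-1/2..x+1/2} \<inter> {-1/2..1/2}) y)"
  proof -
    have "(\<lambda>y. indicator {x-1/2..x+1/2} y *\<^sub>R (s * indicator {-1/2..1/2} y))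
       = (\<lambda>y. s * indicator ({x-1/2..x+1/2} \<inter> {-1/2..1/2::real}) y)"
      by (auto simp: indicator_def fun_eq_iff)
    then show ?thesis unfolding set_lebesgue_integral_def by simp
  qed
  also have "\<dots> = s * tent x" using meas_Icc_Int by simp
  finally show ?thesis .
qed



lemma ind_transfer:
  fixes f g :: "real \<Rightarrow> real"
  assumes "\<And>x. indicator A x * f x = indicator B x * g x"
  shows "set_integrable lborel A f = set_integrable lborel B g"
    and "(LBINT x:A. f x) = (LBINT x:B. g x)"
proof -
  have e: "(\<lambda>x. indicator A x *\<^sub>R f x) = (\<lambda>x. indicator B x *\<^sub>R g x)"
    using assms by (simp add: fun_eq_iff)
  show "set_integrable lborel A f = set_integrable lborel B g"
    unfolding set_integrable_def e ..
  show "(LBINT x:A. f x) = (LBINT x:B. g x)"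
    unfolding set_lebesgue_integral_def e ..
qed

lemma tent_nonneg: "tent x \<ge> 0" unfolding tent_def by simp

lemma tent_out: "\<bar>x\<bar> \<ge> 1 \<Longrightarrow> tent x = 0" unfolding tent_def by simp

lemma tent_cont: "continuous_on S tent"
  unfolding tent_def by (intro continuous_intros)

definition Bint :: "real \<Rightarrow> real" where
  "Bint r = (LBINT x:{-1..1}. tent x powr r)"

lemma Bint_integrable: "r > 0 \<Longrightarrow> set_integrable lborel {-1..1} (\<lambda>x. tent x powr r)"
  unfolding set_integrable_def
  by (rule borel_integrable_compact) (auto intro!: continuous_on_powr' tent_cont continuous_on_const simp: tent_nonneg)

lemma Bint_nonneg: "Bint r \<ge> 0"
  unfolding Bint_def set_lebesgue_integral_def
  by (intro Bochner_Integration.integral_nonneg) (auto simp: indicator_def)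

lemma Bint_pos: assumes r: "r > 0" shows "Bint r > 0"
proof -
  have i1: "integrable lborel (\<lambda>x::real. indicator {-1/2..1/2::real} x * ((1/2::real) powr r))"
    using borel_integrable_compact[of "{-1/2..1/2::real}" "\<lambda>_. (1/2) powr r"] by simp
  have i2: "integrable lborel (\<lambda>x. indicator {-1..1} x * (tent x powr r))"
    using Bint_integrable[OF r] unfolding set_integrable_def by simp
  have "(LINT x|lborel. indicator {-1/2..1/2::real} x * ((1/2::real) powr r))
      \<le> (LINT x|lborel. indicator {-1..1} x * (tent x powr r))"
  proof (rule integral_mono[OF i1 i2])
    fix x :: real
    show "indicator {-1/2..1/2::real} x * ((1/2::real) powr r) \<le> indicator {-1..1} x * (tent x powr r)"
    proof (cases "x \<in> {-1/2..1/2}")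
      case True
      then have "1/2 \<le> tent x" unfolding tent_def by auto
      then have "(1/2) powr r \<le> tent x powr r" using r by (intro powr_mono2) auto
      then show ?thesis using True by auto
    qed auto
  qed
  moreover have "(LINT x|lborel. indicator {-1/2..1/2::real} x * ((1/2::real) powr r)) = (1/2) powr r"
    by simp
  ultimately have "(1/2) powr r \<le> Bint r"
    unfolding Bint_def set_lebesgue_integral_def by simp
  moreover have "(1/2::real) powr r > 0" by simp
  ultimately show ?thesis by linarith
qed

lemma Vf_pow:
  assumes K: "K \<ge> 2" and s: "s > 0" and r: "r > 0"
  shows "set_integrable lborel (IK K) (\<lambda>x. \<bar>avgop (Vf s K) x\<bar> powr r)"
    and "(LBINT x:IK K. \<bar>avgop (Vf s K) x\<bar> powr r) = s powr r * Bint r"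
proof -
  have pw: "\<And>x. indicator (IK K) x * (\<bar>avgop (Vf s K) x\<bar> powr r)
            = indicator {-1..1} x * (s powr r * tent x powr r)"
  proof -
    fix x
    show "indicator (IK K) x * (\<bar>avgop (Vf s K) x\<bar> powr r)
            = indicator {-1..1} x * (s powr r * tent x powr r)"
    proof (cases "x \<in> IK K")
      case True
      have e: "\<bar>avgop (Vf s K) x\<bar> powr r = s powr r * tent x powr r"
        using avgop_Vf[OF K True] s tent_nonneg[of x] by (simp add: abs_mult powr_mult)
      show ?thesis
      proof (cases "x \<in> {-1..1}")
        case False
        then have "tent x = 0" by (intro tent_out) auto
        then show ?thesis using True False e by simp
      qed (use True e in simp)
    next
      case False
      then have "x \<notin> {-1..1}" using K unfolding IK_def by auto
      then show ?thesis using False by simp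
    qed
  qed
  have i: "set_integrable lborel {-1..1} (\<lambda>x. s powr r * tent x powr r)"
    using Bint_integrable[OF r] by simp
  show "set_integrable lborel (IK K) (\<lambda>x. \<bar>avgop (Vf s K) x\<bar> powr r)"
    using ind_transfer(1)[OF pw] i by simp
  show "(LBINT x:IK K. \<bar>avgop (Vf s K) x\<bar> powr r) = s powr r * Bint r"
    unfolding ind_transfer(2)[OF pw] Bint_def by simp
qed

lemma Vf_sq:
  assumes K: "K \<ge> 2"
  shows "set_integrable lborel (IK K) (\<lambda>x. (Vf s K x)\<^sup>2)"
    and "L2sq K (Vf s K) = s\<^sup>2"
proof -
  have pw: "\<And>x. indicator (IK K) x * (Vf s K x)\<^sup>2 = indicator {-1/2..1/2} x * s\<^sup>2"
  proof -
    fix x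
    show "indicator (IK K) x * (Vf s K x)\<^sup>2 = indicator {-1/2..1/2} x * s\<^sup>2"
    proof (cases "x \<in> IK K")
      case True
      then have "\<bar>x\<bar> \<le> K + 1/2" unfolding IK_def by auto
      then have "Vf s K x = s * indicator {-1/2..1/2} x" by (rule Vf_local[OF K])
      then show ?thesis using True by (simp add: indicator_def power_mult_distrib)
    next
      case False
      then have "x \<notin> {-1/2..1/2}" using K unfolding IK_def by auto
      then show ?thesis using False by simp
    qed
  qed
  have i: "set_integrable lborel {-1/2..1/2} (\<lambda>x::real. s\<^sup>2)"
    unfolding set_integrable_def
    using borel_integrable_compact[of "{-1/2..1/2::real}" "\<lambda>_. s\<^sup>2"] by simp
  show "set_integrable lborel (IK K) (\<lambda>x. (Vf s K x)\<^sup>2)"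
    using ind_transfer(1)[OF pw] i by simp
  show "L2sq K (Vf s K) = s\<^sup>2"
    unfolding L2sq_def ind_transfer(2)[OF pw] by (simp add: set_integral_const)
qed



lemma exists_s:
  fixes p q \<sigma>2 :: real
  assumes p: "p > 2" and q: "1 < q" "q < p" and sg: "\<sigma>2 > 0"
  shows "\<exists>s>0. \<sigma>2 * s\<^sup>2 + q * (s powr q * Bint q) - p * (s powr p * Bint p) = 0"
proof -
  define b where "b = Bint q"
  define d where "d = Bint p"
  have b0: "b \<ge> 0" unfolding b_def by (rule Bint_nonneg)
  have d0: "d > 0" unfolding d_def using p by (intro Bint_pos) auto
  define f where "f s = \<sigma>2 * s\<^sup>2 + q * (s powr q * b) - p * (s powr p * d)" for s
  have split: "x powr a = x powr c * x powr (a - c)" if "x > 0" for x a c :: real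
  proof -
    have "x powr a = x powr (c + (a - c))" by simp
    also have "\<dots> = x powr c * x powr (a - c)" by (rule powr_add)
    finally show ?thesis .
  qed
  have sq: "x\<^sup>2 = x powr 2" if "x > 0" for x :: real using that by (simp add: powr_numeral)
  define s1 where "s1 = (\<sigma>2/(p*d)) powr (1/(p-2))"
  have s1p: "s1 > 0" unfolding s1_def using sg p d0 by simp
  have "s1 powr (p-2) = (\<sigma>2/(p*d)) powr ((1/(p-2)) * (p-2))"
    unfolding s1_def by (simp only: powr_powr)
  also have "(1/(p-2)) * (p-2) = 1" using p by simp
  finally have s1e: "s1 powr (p-2) = \<sigma>2/(p*d)" using sg p d0 by simp
  have "p * (s1 powr p * d) = p * d * (s1 powr 2 * s1 powr (p-2))"
    using split[OF s1p, of p 2] by simp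
  also have "\<dots> = \<sigma>2 * s1\<^sup>2" using s1e sq[OF s1p] p d0 by (simp add: field_simps)
  finally have "f s1 = q * (s1 powr q * b)" unfolding f_def by simp
  then have f1: "f s1 \<ge> 0" using q b0 by simp
  define m where "m = max 2 q"
  have m: "m < p" "2 \<le> m" "q \<le> m" unfolding m_def using p q by auto
  define t where "t = ((\<sigma>2 + q*b)/(p*d)) powr (1/(p-m))"
  define s2 where "s2 = max s1 (max 1 t)"
  have s2: "s2 \<ge> 1" "s2 \<ge> s1" "s2 \<ge> t" unfolding s2_def by auto
  have s2p: "s2 > 0" using s2 by simp
  have tn: "t \<ge> 0" unfolding t_def by simp
  have "(\<sigma>2 + q*b)/(p*d) = t powr (p-m)"
  proof -
    have "t powr (p-m) = ((\<sigma>2 + q*b)/(p*d)) powr ((1/(p-m)) * (p-m))"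
      unfolding t_def by (simp only: powr_powr)
    also have "(1/(p-m)) * (p-m) = 1" using m by simp
    finally show ?thesis using sg q b0 p d0 by simp
  qed
  also have "\<dots> \<le> s2 powr (p-m)" using tn s2 m by (intro powr_mono2) auto
  finally have t2: "(\<sigma>2 + q*b) \<le> p * d * s2 powr (p-m)" using p d0 by (simp add: field_simps)
  have a1: "s2\<^sup>2 \<le> s2 powr m"
  proof -
    have "s2 powr 2 \<le> s2 powr m" using s2 m by (intro powr_mono) auto
    then show ?thesis using sq[OF s2p] by simp
  qed
  have a2: "s2 powr q \<le> s2 powr m" using s2 m by (simp add: powr_mono)
  have "f s2 \<le> \<sigma>2 * s2 powr m + q * (s2 powr m * b) - p * (s2 powr p * d)"
    unfolding f_def using a1 a2 sg q b0
    by (smt (verit) mult_left_mono mult_right_mono)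
  also have "\<dots> = s2 powr m * ((\<sigma>2 + q*b) - p * d * s2 powr (p-m))"
    using split[OF s2p, of p m] by (simp add: algebra_simps)
  also have "\<dots> \<le> 0" using t2 by (simp add: mult_nonneg_nonpos)
  finally have f2: "f s2 \<le> 0" .
  have "continuous_on {s1..s2} f"
    unfolding f_def using s1p
    by (intro continuous_intros continuous_on_powr') auto
  then obtain s where s: "s1 \<le> s" "s \<le> s2" "f s = 0"
    using IVT2'[of f s2 0 s1] f1 f2 s2 by auto
  then show ?thesis using s1p unfolding f_def b_def d_def by (intro exI[of _ s]) auto
qed



lemma Vf_MK:
  fixes p q \<sigma>2 :: real
  assumes p: "p > 2" and q: "1 < q" "q < p" and K: "K \<ge> 2" and s: "s > 0"
    and F: "\<sigma>2 * s\<^sup>2 + q * (s powr q * Bint q) - p * (s powr p * Bint p) = 0"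
  shows "Vf s K \<in> MK \<sigma>2 p q K"
    and "LK \<sigma>2 p q K (Vf s K) = 1/2 * \<sigma>2 * s\<^sup>2 + s powr q * Bint q - s powr p * Bint p"
proof -
  have q0: "q > 0" and p0: "p > 0" using p q by auto
  have X: "Vf s K \<in> XK p q K"
    unfolding XK_def using Vf_per Vf_sq(1)[OF K] Vf_pow(1)[OF K s q0] Vf_pow(1)[OF K s p0]
    by (auto simp: measurable_lborel1)
  have nz: "\<not> (AE x in lborel. x \<in> IK K \<longrightarrow> Vf s K x = 0)"
  proof
    assume ae: "AE x in lborel. x \<in> IK K \<longrightarrow> Vf s K x = 0"
    have "L2sq K (Vf s K) = (LBINT x:IK K. 0)"
      unfolding L2sq_def using ae
      by (intro set_lebesgue_integral_cong_AE) (auto simp: IK_def elim: AE_mp)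
    then show False using Vf_sq(2)[OF K] s by simp
  qed
  have FK: "FK \<sigma>2 p q K (Vf s K) = 0"
    unfolding FK_def QK_def PK_def Vf_sq(2)[OF K] Vf_pow(2)[OF K s q0] Vf_pow(2)[OF K s p0]
    using F by simp
  show "Vf s K \<in> MK \<sigma>2 p q K" unfolding MK_def using X nz FK by auto
  show "LK \<sigma>2 p q K (Vf s K) = 1/2 * \<sigma>2 * s\<^sup>2 + s powr q * Bint q - s powr p * Bint p"
    unfolding LK_def QK_def PK_def Vf_sq(2)[OF K] Vf_pow(2)[OF K s q0] Vf_pow(2)[OF K s p0] ..
qed

theorem corollary12:
  fixes p q \<sigma>2 :: real
  assumes "p > 2" and "1 < q" and "q < p" and "\<sigma>2 > 0"
  shows "\<exists>K0::real. \<forall>K. K0 \<le> K \<and> 0 < K \<longrightarrow>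
           (\<forall>W. is_minimizer_on_MK \<sigma>2 p q K W \<longrightarrow> \<not> ae_constant_on_IK K W)"
proof -
  obtain s where s: "s > 0" and F: "\<sigma>2 * s\<^sup>2 + q * (s powr q * Bint q) - p * (s powr p * Bint p) = 0"
    using exists_s[OF assms] by blast
  define C where "C = 1/2 * \<sigma>2 * s\<^sup>2 + s powr q * Bint q - s powr p * Bint p"
  define \<delta> where "\<delta> = (\<sigma>2/p) powr (2/(p-2))"
  define A where "A = (p/2 - 1) * \<sigma>2 * 2 * \<delta>"
  have A0: "A > 0" unfolding A_def \<delta>_def using assms by simp
  define K0 where "K0 = max 2 (p * \<bar>C\<bar> / A + 1)"
  show ?thesis
  proof (intro exI[of _ K0] allI impI)
    fix K W assume K: "K0 \<le> K \<and> 0 < K" and mn: "is_minimizer_on_MK \<sigma>2 p q K W"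
    show "\<not> ae_constant_on_IK K W"
    proof
      assume cst: "ae_constant_on_IK K W"
      have K2: "K \<ge> 2" using K unfolding K0_def by auto
      have KA: "p * \<bar>C\<bar> / A < K" using K unfolding K0_def by auto
      then have KA2: "p * \<bar>C\<bar> < K * A" using A0 by (simp add: pos_divide_less_eq)
      have WM: "W \<in> MK \<sigma>2 p q K" and le: "\<forall>V\<in>MK \<sigma>2 p q K. LK \<sigma>2 p q K W \<le> LK \<sigma>2 p q K V"
        using mn unfolding is_minimizer_on_MK_def by auto
      have "LK \<sigma>2 p q K W \<le> C"
        using le Vf_MK[OF assms(1,2,3) K2 s F] unfolding C_def by auto
      then have "p * LK \<sigma>2 p q K W \<le> p * C" using assms by simp
      moreover have "p * LK \<sigma>2 p q K W \<ge> (p/2 - 1) * \<sigma>2 * (2*K) * \<delta>"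
        unfolding \<delta>_def by (rule const_lower[OF assms K2 WM cst])
      moreover have "(p/2 - 1) * \<sigma>2 * (2*K) * \<delta> = K * A" unfolding A_def by simp
      moreover have "p * C \<le> p * \<bar>C\<bar>" using assms by simp
      ultimately show False using KA2 by linarith
    qed
  qed
qed

end
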